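(* Let $n>1$, let $\mathcal{X}=\{-1,1\}^n$, and let $\mathcal{P}\subseteq[0,1]$ be a Lebesgue measurable set with Lebesgue measure $\mu(\mathcal{P})>0$. Let $\mathcal{K}$ be the set of admissible controllers, i.e. maps $K:\mathcal{X}\to\mathbb{R}^n$, $X=(X_0,\dots,X_{n-1})\mapsto (K_0(X),\dots,K_{n-1}(X))$, such that for each $k$ the value $K_k(X)$ depends only on $X_0,\dots,X_{k-1}$, and $|K_k(X)|\leq 1$ for all $X,k$. For $K\in\mathcal{K}$ and $p\in[0,1]$ let \[ ELG_K(p)\doteq\frac{1}{n}\sum_{X\in\mathcal{X}}p^{n_h(X)}(1-p)^{n-n_h(X)}\sum_{k=0}^{n-1}\log\bigl(1+K_k(X)X_k\bigr), \] where $n_h(X)=\#\{i:X_i=1\}$, with conventions $\log 0=-\infty$, $0\cdot(-\infty)=0$. Let $K^*\in\mathcal{K}$ be the controller \[ K_k^*(X)=\frac{\int_{p\in\mathcal{P}}p^{q_k}(1-p)^{k-q_k}(2p-1)\,dp}{\int_{p\in\mathcal{P}}p^{q_k}(1-p)^{k-q_k}\,dp},\qquad q_k=\#\{i\in\{0,\dots,k-1\}:X_i=1\}, \] (the unique maximizer of $K\mapsto\int_{\mathcal{P}}ELG_K(p)\,dp$ over $\mathcal{K}$), and let $K_0^*$ denote the static linear controller with constant gain $K_0^*=2\bar p-1$ at every stage and every sample path, where $\bar p=\frac{1}{\mu(\mathcal{P})}\int_{\mathcal{P}}p\,dp$ (the optimal static linear controller). Then \[ \int_{p\in\mathcal{P}}ELG_{K^*}(p)\,dp\;>\;\int_{p\in\mathcal{P}}ELG_{K_0^*}(p)\,dp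 . \]
   Context: Interpretation: $n$ flips of a coin with unknown probability of heads $p\in\mathcal{P}$ and even-money payoff; $X_k=1$ is heads, $X_k=-1$ tails; the bet at stage $k$ is $K_k(X)V_k$ and wealth evolves as $V_{k+1}=(1+K_k(X)X_k)V_k$, so $ELG_K(p)=\frac1n\mathbb{E}\log(V_n/V_0)$. A static linear controller is one with $K_k(X)\equiv K_0$ constant for all $k$ and $X$. *)

theory Defs
  imports "HOL-Analysis.Analysis"
begin

definition paths :: "nat \<Rightarrow> (nat \<Rightarrow> real) set" where
  "paths n = PiE {..<n} (\<lambda>_. {-1, 1})"

definition heads :: "nat \<Rightarrow> (nat \<Rightarrow> real) \<Rightarrow> nat" where
  "heads m X = card {i. i < m \<and> X i = 1}"

definition admissible :: "nat \<Rightarrow> (nat \<Rightarrow> (nat \<Rightarrow> real) \<Rightarrow> real) \<Rightarrow> bool" where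
  "admissible n K \<longleftrightarrow>
     (\<forall>k<n. \<forall>X\<in>paths n. \<forall>Y\<in>paths n. (\<forall>i<k. X i = Y i) \<longrightarrow> K k X = K k Y) \<and>
     (\<forall>k<n. \<forall>X\<in>paths n. \<bar>K k X\<bar> \<le> 1)"

definition ELG :: "nat \<Rightarrow> (nat \<Rightarrow> (nat \<Rightarrow> real) \<Rightarrow> real) \<Rightarrow> real \<Rightarrow> real" where
  "ELG n K p = (1 / real n) *
     (\<Sum>X\<in>paths n. p ^ heads n X * (1 - p) ^ (n - heads n X) *
        (\<Sum>k<n. ln (1 + K k X * X k)))"

definition Kstar :: "real set \<Rightarrow> nat \<Rightarrow> (nat \<Rightarrow> real) \<Rightarrow> real" where
  "Kstar P k X =
     (LINT p:P|lebesgue. p ^ heads k X * (1 - p) ^ (k - heads k X) * (2 * p - 1)) /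
     (LINT p:P|lebesgue. p ^ heads k X * (1 - p) ^ (k - heads k X))"

definition pbar :: "real set \<Rightarrow> real" where
  "pbar P = (LINT p:P|lebesgue. p) / measure lebesgue P"

definition Kstatic :: "real set \<Rightarrow> nat \<Rightarrow> (nat \<Rightarrow> real) \<Rightarrow> real" where
  "Kstatic P k X = 2 * pbar P - 1"

end

theory Submission imports Defs begin

lemma intg:
  fixes g :: "real \<Rightarrow> real"
  assumes P: "P \<in> sets lebesgue" "P \<subseteq> {0..1}" and g: "continuous_on UNIV g"
  shows "set_integrable lebesgue P g"
proof -
  have "compact (g ` {0..1})"
    by (rule compact_continuous_image[OF continuous_on_subset[OF g] compact_Icc]) auto
  then obtain B where B: "\<And>x. x \<in> {0..1} \<Longrightarrow> norm (g x) \<le> B"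
    using compact_imp_bounded bounded_iff by (metis image_eqI)
  have gm: "g \<in> borel_measurable borel" using g by (rule borel_measurable_continuous_onI)
  have gm': "g \<in> borel_measurable lebesgue"
    using gm by (simp add: measurable_completion measurable_lborel1)
  have fin: "emeasure lebesgue P < \<infinity>"
  proof -
    have "emeasure lebesgue P \<le> emeasure lebesgue {0..1::real}"
      using P by (intro emeasure_mono) auto
    also have "\<dots> < \<infinity>" by simp
    finally show ?thesis .
  qed
  show ?thesis unfolding set_integrable_def
    by (rule integrableI_bounded_set_indicator[OF P(1) gm' fin, of B]) (use B P(2) in \<open>auto intro!: AE_I2\<close>)
qed

lemma pos_int:
  fixes g :: "real \<Rightarrow> real"
  assumes P: "P \<in> sets lebesgue" "P \<subseteq> {0..1}" "emeasure lebesgue P > 0"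
    and g: "continuous_on UNIV g"
    and nn: "\<And>x. x \<in> {0..1} \<Longrightarrow> 0 \<le> g x" and F: "finite F"
    and pos: "\<And>x. x \<in> {0..1} \<Longrightarrow> x \<notin> F \<Longrightarrow> 0 < g x"
  shows "(LINT x:P|lebesgue. g x) > 0"
proof -
  let ?f = "\<lambda>x. indicator P x *\<^sub>R g x"
  have int: "integrable lebesgue ?f" using intg[OF P(1,2) g] unfolding set_integrable_def .
  have nn': "AE x in lebesgue. 0 \<le> ?f x"
    using nn P(2) by (intro AE_I2) (auto split: split_indicator)
  have ge: "integral\<^sup>L lebesgue ?f \<ge> 0" using nn' by (rule integral_nonneg_AE)
  have "integral\<^sup>L lebesgue ?f \<noteq> 0"
  proof
    assume "integral\<^sup>L lebesgue ?f = 0"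
    then have "AE x in lebesgue. ?f x = 0" using integral_nonneg_eq_0_iff_AE[OF int nn'] by simp
    then have ae: "AE x in lebesgue. x \<notin> P - F"
    proof (rule eventually_mono)
      fix x assume "?f x = 0"
      then show "x \<notin> P - F" using pos[of x] P(2) by (force split: split_indicator)
    qed
    have FN: "F \<in> null_sets lebesgue"
      by (rule null_sets_completionI[OF finite_imp_null_set_lborel[OF F]])
    have PF: "P - F \<in> sets lebesgue" using P(1) FN by auto
    have "{x \<in> space lebesgue. \<not> x \<notin> P - F} = P - F" by auto
    then have "P - F \<in> null_sets lebesgue" using ae AE_iff_null[of lebesgue "\<lambda>x. x \<notin> P - F"] PF by simp
    then have "emeasure lebesgue (P - F) = 0" by auto
    moreover have "emeasure lebesgue (P - F) = emeasure lebesgue P"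
      by (rule emeasure_Diff_null_set[OF FN P(1)])
    ultimately show False using P(3) by simp
  qed
  then show ?thesis using ge unfolding set_lebesgue_integral_def by simp
qed


lemma heads_le: "heads m X \<le> m"
proof -
  have "heads m X \<le> card {..<m}" unfolding heads_def by (rule card_mono) auto
  then show ?thesis by simp
qed

lemma heads_cong: "(\<And>i. i < m \<Longrightarrow> X i = Y i) \<Longrightarrow> heads m X = heads m Y"
  unfolding heads_def by (rule arg_cong[where f=card]) auto

lemma heads_Suc: "heads (Suc m) X = heads m X + (if X m = 1 then 1 else 0)"
proof -
  have e: "{i. i < Suc m \<and> X i = 1} = {i. i < m \<and> X i = 1} \<union> (if X m = 1 then {m} else {})"
    by (auto simp: less_Suc_eq)
  show ?thesis unfolding heads_def e by (auto simp: card_insert_if)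
qed

lemma heads_upd: "heads m (X(m := x)) = heads m X"
  by (rule heads_cong) auto

lemma sum_paths_Suc:
  "(\<Sum>Y\<in>paths (Suc k). G Y) = (\<Sum>X\<in>paths k. G (X(k := 1)) + G (X(k := -1)))"
proof -
  have e: "paths (Suc k) = (\<lambda>(y, g). g(k := y)) ` ({-1, 1} \<times> paths k)"
    unfolding paths_def lessThan_Suc by (rule PiE_insert_eq)
  have inj: "inj_on (\<lambda>(y, g). g(k := y)) ({-1, 1} \<times> paths k)"
  proof (rule inj_onI)
    fix u v assume a0: "u \<in> {-1,1} \<times> paths k" "v \<in> {-1,1} \<times> paths k"
      and eq0: "(\<lambda>(y, g). g(k := y)) u = (\<lambda>(y, g). g(k := y)) v"
    obtain y g y' g' where uv: "u = (y, g)" "v = (y', g')" by (cases u, cases v) auto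
    have a: "g \<in> paths k" "g' \<in> paths k" using a0 uv by auto
    have eq: "g(k := y) = g'(k := y')" using eq0 uv by simp
    have "y = y'" using fun_cong[OF eq, of k] by simp
    moreover have "g = g'"
    proof
      fix i show "g i = g' i"
      proof (cases "i = k")
        case True
        then have "g i = undefined" "g' i = undefined" using a unfolding paths_def by (auto simp: PiE_def extensional_def)
        then show ?thesis by simp
      next
        case False then show ?thesis using fun_cong[OF eq, of i] by simp
      qed
    qed
    ultimately show "u = v" using uv by simp
  qed
  have fin: "finite (paths k)" unfolding paths_def by (rule finite_PiE) auto
  have "(\<Sum>Y\<in>paths (Suc k). G Y) = (\<Sum>(y,g)\<in>{-1, 1} \<times> paths k. G (g(k := y)))"
    unfolding e by (subst sum.reindex[OF inj]) (simp add: case_prod_unfold)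
  also have "\<dots> = (\<Sum>y\<in>{-1,1}. \<Sum>g\<in>paths k. G (g(k := y)))"
    by (rule sum.cartesian_product[symmetric])
  also have "\<dots> = (\<Sum>X\<in>paths k. G (X(k := 1)) + G (X(k := -1)))"
    by (simp add: sum.distrib add.commute)
  finally show ?thesis .
qed

definition w :: "nat \<Rightarrow> (nat \<Rightarrow> real) \<Rightarrow> real \<Rightarrow> real" where
  "w m X p = p ^ heads m X * (1 - p) ^ (m - heads m X)"

lemma w_Suc1: "w (Suc k) (X(k := 1)) p = w k X p * p"
  unfolding w_def heads_Suc by (simp add: heads_upd)

lemma w_Suc2: "w (Suc k) (X(k := -1)) p = w k X p * (1 - p)"
proof -
  have "Suc k - heads k X = Suc (k - heads k X)" using heads_le[of k X] by simp
  then show ?thesis unfolding w_def heads_Suc by (simp add: heads_upd)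
qed

lemma marg_pw:
  assumes "m \<le> n" and F: "\<And>X Y. (\<And>i. i < m \<Longrightarrow> X i = Y i) \<Longrightarrow> F X = F Y"
  shows "(\<Sum>X\<in>paths n. w n X p * F X) = (\<Sum>X\<in>paths m. w m X p * F X)"
  using assms(1)
proof (induction n rule: dec_induct)
  case base then show ?case by simp
next
  case (step k)
  have "(\<Sum>X\<in>paths (Suc k). w (Suc k) X p * F X)
      = (\<Sum>X\<in>paths k. w k X p * p * F (X(k:=1)) + w k X p * (1 - p) * F (X(k:=-1)))"
    by (simp add: sum_paths_Suc w_Suc1 w_Suc2)
  also have "\<dots> = (\<Sum>X\<in>paths k. w k X p * F X)"
  proof (rule sum.cong[OF refl])
    fix X
    have "F (X(k:=1)) = F X" "F (X(k:=-1)) = F X" using step(1) by (auto intro!: F)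
    then show "w k X p * p * F (X(k:=1)) + w k X p * (1 - p) * F (X(k:=-1)) = w k X p * F X"
      by (simp add: algebra_simps)
  qed
  finally show ?case using step by simp
qed


lemma set_int_sum:
  fixes f :: "'i \<Rightarrow> real \<Rightarrow> real"
  assumes "\<And>i. i \<in> S \<Longrightarrow> set_integrable M A (f i)"
  shows "(LINT x:A|M. (\<Sum>i\<in>S. f i x)) = (\<Sum>i\<in>S. LINT x:A|M. f i x)"
  unfolding set_lebesgue_integral_def real_scaleR_def sum_distrib_left
  by (subst Bochner_Integration.integral_sum) (use assms in \<open>auto simp: set_integrable_def\<close>)

lemma w_cont: "continuous_on UNIV (\<lambda>p. w m X p)"
  unfolding w_def by (intro continuous_intros)

lemma w_nonneg: "p \<in> {0..1} \<Longrightarrow> 0 \<le> w m X p"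
  unfolding w_def by auto

lemma w_pos: "p \<in> {0..1} \<Longrightarrow> p \<notin> {0,1} \<Longrightarrow> 0 < w m X p"
  unfolding w_def by auto

locale setting =
  fixes P :: "real set"
  assumes Ps: "P \<in> sets lebesgue" and Psub: "P \<subseteq> {0..1}" and Ppos: "emeasure lebesgue P > 0"
begin

lemma si: "continuous_on UNIV (g :: real \<Rightarrow> real) \<Longrightarrow> set_integrable lebesgue P g"
  by (rule intg[OF Ps Psub])

lemma int_ELG:
  "(LINT p:P|lebesgue. ELG n K p) =
     (1 / real n) * (\<Sum>X\<in>paths n. (LINT p:P|lebesgue. w n X p) * (\<Sum>k<n. ln (1 + K k X * X k)))"
proof -
  have "(LINT p:P|lebesgue. ELG n K p) =
      (LINT p:P|lebesgue. (1 / real n) * (\<Sum>X\<in>paths n. w n X p * (\<Sum>k<n. ln (1 + K k X * X k))))"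
    unfolding ELG_def w_def by simp
  also have "\<dots> = (1 / real n) * (\<Sum>X\<in>paths n. LINT p:P|lebesgue. w n X p * (\<Sum>k<n. ln (1 + K k X * X k)))"
    by (subst set_integral_mult_right, subst set_int_sum)
       (auto intro!: si continuous_intros w_cont)
  finally show ?thesis by simp
qed

lemma marg_int:
  assumes "m \<le> n" and F: "\<And>X Y. (\<And>i. i < m \<Longrightarrow> X i = Y i) \<Longrightarrow> F X = F Y"
  shows "(\<Sum>X\<in>paths n. (LINT p:P|lebesgue. w n X p) * F X) = (\<Sum>X\<in>paths m. (LINT p:P|lebesgue. w m X p) * F X)"
proof -
  have "(\<Sum>X\<in>paths n. (LINT p:P|lebesgue. w n X p) * F X) = (\<Sum>X\<in>paths n. (LINT p:P|lebesgue. w n X p * F X))"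
    by simp
  also have "\<dots> = (LINT p:P|lebesgue. (\<Sum>X\<in>paths n. w n X p * F X))"
    by (rule set_int_sum[symmetric]) (auto intro!: si continuous_intros w_cont)
  also have "\<dots> = (LINT p:P|lebesgue. (\<Sum>X\<in>paths m. w m X p * F X))"
    using marg_pw[OF assms] by simp
  also have "\<dots> = (\<Sum>X\<in>paths m. (LINT p:P|lebesgue. w m X p * F X))"
    by (rule set_int_sum) (auto intro!: si continuous_intros w_cont)
  finally show ?thesis by simp
qed

definition AA where "AA k X = (LINT p:P|lebesgue. w k X p * p)"
definition BB where "BB k X = (LINT p:P|lebesgue. w k X p * (1 - p))"

lemma AA_pos: "AA k X > 0"
  unfolding AA_def
  by (rule pos_int[OF Ps Psub Ppos _ _ _, of _ "{0,1}"]) (auto intro!: continuous_intros w_cont w_nonneg w_pos mult_nonneg_nonneg mult_pos_pos)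

lemma BB_pos: "BB k X > 0"
  unfolding BB_def
  by (rule pos_int[OF Ps Psub Ppos _ _ _, of _ "{0,1}"]) (auto intro!: continuous_intros w_cont w_nonneg w_pos mult_nonneg_nonneg mult_pos_pos)

lemma Kstar_eq: "Kstar P k X = (AA k X - BB k X) / (AA k X + BB k X)"
proof -
  have n: "(LINT p:P|lebesgue. p ^ heads k X * (1 - p) ^ (k - heads k X) * (2 * p - 1)) = AA k X - BB k X"
    unfolding AA_def BB_def
    by (subst set_integral_diff(2)[symmetric]) (auto intro!: si continuous_intros w_cont set_lebesgue_integral_cong simp: w_def algebra_simps)
  have d: "(LINT p:P|lebesgue. p ^ heads k X * (1 - p) ^ (k - heads k X)) = AA k X + BB k X"
    unfolding AA_def BB_def
    by (subst set_integral_add(2)[symmetric]) (auto intro!: si continuous_intros w_cont set_lebesgue_integral_cong simp: w_def algebra_simps)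
  show ?thesis unfolding Kstar_def n d ..
qed

lemma Kstar_cong: "(\<And>i. i < k \<Longrightarrow> X i = Y i) \<Longrightarrow> Kstar P k X = Kstar P k Y"
  unfolding Kstar_def using heads_cong[of k X Y] by simp

end


lemma ln_diff_ge:
  fixes y z :: real assumes "y > 0" "z > 0"
  shows "ln y - ln z \<ge> (y - z) / y" and "y \<noteq> z \<Longrightarrow> ln y - ln z > (y - z) / y"
proof -
  have q: "z / y > 0" using assms by simp
  have l: "ln (z / y) = ln z - ln y" using assms by (simp add: ln_div)
  have e: "z / y - 1 = - ((y - z) / y)" using assms by (simp add: field_simps)
  show "ln y - ln z \<ge> (y - z) / y" using ln_le_minus_one[OF q] l e by linarith
  assume ne: "y \<noteq> z"
  have "z / y \<noteq> 1" using ne assms by simp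
  then have "ln (z / y) \<noteq> z / y - 1" using ln_eq_minus_one[OF q] by auto
  then show "ln y - ln z > (y - z) / y" using ln_le_minus_one[OF q] l e by linarith
qed

context setting begin

abbreviation S0 where "S0 \<equiv> (LINT p:P|lebesgue. 1::real)"
abbreviation S1 where "S1 \<equiv> (LINT p:P|lebesgue. p)"
abbreviation S2 where "S2 \<equiv> (LINT p:P|lebesgue. p * p)"

lemma w0: "w 0 X p = 1" unfolding w_def heads_def by simp

lemma S0_eq: "S0 = measure lebesgue P"
proof -
  have "emeasure lebesgue P \<le> emeasure lebesgue {0..1::real}"
    using Ps Psub by (intro emeasure_mono) auto
  then have fin: "emeasure lebesgue P \<noteq> \<infinity>" by (auto simp: top_unique)
  show ?thesis using set_integral_const[OF Ps fin, of "1::real"] by simp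
qed

lemma const_int: "(LINT x:P|lebesgue. (c::real)) = c * S0"
proof -
  have "emeasure lebesgue P \<le> emeasure lebesgue {0..1::real}"
    using Ps Psub by (intro emeasure_mono) auto
  then have fin: "emeasure lebesgue P \<noteq> \<infinity>" by (auto simp: top_unique)
  show ?thesis using set_integral_const[OF Ps fin, of c] S0_eq by simp
qed

lemma AA0: "AA 0 X = S1" unfolding AA_def w0 by simp
lemma BB0: "BB 0 X = S0 - S1" unfolding BB_def w0 mult_1
  by (subst set_integral_diff(2)) (auto intro!: si continuous_intros)

lemma Kstatic_eq: "Kstatic P k X = Kstar P 0 X"
proof -
  have pos: "S1 > 0" "S0 - S1 > 0" using AA_pos[of 0 X] BB_pos[of 0 X] AA0 BB0 by auto
  show ?thesis unfolding Kstatic_def pbar_def Kstar_eq AA0 BB0 S0_eq[symmetric]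
    using pos by (simp add: field_simps)
qed

lemma Kstar_bnd: "\<bar>Kstar P k X\<bar> < 1"
  using AA_pos[of k X] BB_pos[of k X] unfolding Kstar_eq by (simp add: abs_less_iff field_simps)

lemma var_pos: "S0 * S2 > S1 * S1"
proof -
  have p0: "S0 > 0" using AA_pos[of 0 undefined] BB_pos[of 0 undefined] AA0 BB0 by auto
  define m where "m = S1 / S0"
  have "(LINT p:P|lebesgue. (p - m) * (p - m)) > 0"
    by (rule pos_int[OF Ps Psub Ppos _ _ _, of _ "{m}"]) (auto intro!: continuous_intros simp: zero_less_mult_iff)
  also have "(LINT p:P|lebesgue. (p - m) * (p - m)) = (LINT p:P|lebesgue. p * p - (2 * m) * p + m * m * 1)"
    by (simp add: algebra_simps)
  also have "\<dots> = S2 - 2 * m * S1 + m * m * S0"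
    by (subst set_integral_add(2) set_integral_diff(2), (auto intro!: si continuous_intros)[2])+ (simp add: const_int[of "m*m"] const_int[of m])
  finally have "0 < S2 - 2 * m * S1 + m * m * S0" .
  then have "0 < S0 * (S2 - 2 * m * S1 + m * m * S0)" using p0 by simp
  also have "\<dots> = S0 * S2 - S1 * S1" unfolding m_def using p0 by (simp add: field_simps power2_eq_square)
  finally show ?thesis by simp
qed

end

lemma paths_val: "X \<in> paths n \<Longrightarrow> k < n \<Longrightarrow> X k = 1 \<or> X k = -1"
  unfolding paths_def by (auto simp: PiE_iff)

lemma finite_paths: "finite (paths n)" unfolding paths_def by (rule finite_PiE) auto

context setting begin

lemma I_pos: "(LINT p:P|lebesgue. w m X p) > 0"
  by (rule pos_int[OF Ps Psub Ppos _ _ _, of _ "{0,1}"]) (auto intro!: continuous_intros w_cont w_nonneg w_pos)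

definition cc where "cc = 2 * pbar P - 1"

lemma cc_eq: "cc = Kstar P 0 X"
  using Kstatic_eq[of 0 X] unfolding Kstatic_def cc_def by simp

lemma cc_bnd: "\<bar>cc\<bar> < 1" using Kstar_bnd[of 0 undefined] cc_eq[of undefined] by simp

definition G where "G k X = (Kstar P k X - cc) * X k / (1 + Kstar P k X * X k)"

lemma zero_sum:
  assumes "k < n"
  shows "(\<Sum>X\<in>paths n. (LINT p:P|lebesgue. w n X p) * G k X) = 0"
proof -
  have "(\<Sum>X\<in>paths n. (LINT p:P|lebesgue. w n X p) * G k X) =
        (\<Sum>X\<in>paths (Suc k). (LINT p:P|lebesgue. w (Suc k) X p) * G k X)"
  proof (rule marg_int)
    show "Suc k \<le> n" using assms by simp
    fix X Y :: "nat \<Rightarrow> real" assume h: "\<And>i. i < Suc k \<Longrightarrow> X i = Y i"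
    then have "Kstar P k X = Kstar P k Y" by (intro Kstar_cong) auto
    moreover have "X k = Y k" using h by simp
    ultimately show "G k X = G k Y" unfolding G_def by simp
  qed
  also have "\<dots> = (\<Sum>Z\<in>paths k. (LINT p:P|lebesgue. w (Suc k) (Z(k:=1)) p) * G k (Z(k:=1))
                  + (LINT p:P|lebesgue. w (Suc k) (Z(k:=-1)) p) * G k (Z(k:=-1)))"
    by (rule sum_paths_Suc)
  also have "\<dots> = (\<Sum>Z\<in>paths k. 0)"
  proof (rule sum.cong[OF refl])
    fix Z
    have k1: "Kstar P k (Z(k:=x)) = Kstar P k Z" for x by (rule Kstar_cong) auto
    have i1: "(LINT p:P|lebesgue. w (Suc k) (Z(k:=1)) p) = AA k Z" unfolding AA_def w_Suc1 ..
    have i2: "(LINT p:P|lebesgue. w (Suc k) (Z(k:=-1)) p) = BB k Z" unfolding BB_def w_Suc2 ..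
    define A where "A = AA k Z"
    define B where "B = BB k Z"
    have A: "A > 0" and B: "B > 0" unfolding A_def B_def using AA_pos BB_pos by auto
    have a: "Kstar P k Z = (A - B) / (A + B)" unfolding A_def B_def by (rule Kstar_eq)
    have e1: "1 + Kstar P k Z = 2 * A / (A + B)" unfolding a using A B by (simp add: field_simps)
    have e2: "1 - Kstar P k Z = 2 * B / (A + B)" unfolding a using A B by (simp add: field_simps)
    have "AA k Z * G k (Z(k:=1)) + BB k Z * G k (Z(k:=-1))
        = (Kstar P k Z - cc) * (A / (1 + Kstar P k Z) - B / (1 - Kstar P k Z))"
      unfolding G_def k1 A_def B_def using Kstar_bnd[of k Z] by (simp add: field_simps abs_less_iff)
    also have "A / (1 + Kstar P k Z) - B / (1 - Kstar P k Z) = 0"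
      unfolding e1 e2 using A B by (simp add: field_simps)
    finally show "(LINT p:P|lebesgue. w (Suc k) (Z(k:=1)) p) * G k (Z(k:=1))
                  + (LINT p:P|lebesgue. w (Suc k) (Z(k:=-1)) p) * G k (Z(k:=-1)) = 0"
      unfolding i1 i2 by (simp only: mult_zero_left)
  qed
  finally show ?thesis by simp
qed

end

context setting begin

lemma main:
  assumes n: "n > 1"
  shows "(LINT p:P|lebesgue. ELG n (Kstar P) p) > (LINT p:P|lebesgue. ELG n (Kstatic P) p)"
proof -
  define I where "I X = (LINT p:P|lebesgue. w n X p)" for X
  define L where "L k X = ln (1 + Kstar P k X * X k) - ln (1 + cc * X k)" for k X
  have ks: "Kstatic P k X = cc" for k X unfolding Kstatic_def cc_def ..
  have Ipos: "I X > 0" for X unfolding I_def by (rule I_pos)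
  have le: "I X * G k X \<le> I X * L k X" if "X \<in> paths n" "k < n" for X k
  proof -
    have y: "1 + Kstar P k X * X k > 0" and z: "1 + cc * X k > 0"
      using paths_val[OF that] Kstar_bnd[of k X] cc_bnd by (auto simp: abs_less_iff)
    have "G k X = ((1 + Kstar P k X * X k) - (1 + cc * X k)) / (1 + Kstar P k X * X k)"
      unfolding G_def by (simp add: algebra_simps)
    then have "G k X \<le> L k X" unfolding L_def using ln_diff_ge(1)[OF y z] by simp
    then show ?thesis using Ipos[of X] by simp
  qed
  define Xs where "Xs = (\<lambda>i. if i < n then (1::real) else undefined)"
  have Xs: "Xs \<in> paths n" unfolding paths_def Xs_def by (auto simp: PiE_iff extensional_def)
  have "{i. i < 1 \<and> Xs i = 1} = {0}" unfolding Xs_def using n by auto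
  then have h1: "heads 1 Xs = 1" unfolding heads_def by simp
  have w1: "w 1 Xs p = p" for p unfolding w_def h1 by simp
  have AA1: "AA 1 Xs = S2" unfolding AA_def w1 ..
  have BB1: "BB 1 Xs = S1 - S2" unfolding BB_def w1
    by (simp add: right_diff_distrib, subst set_integral_diff(2)) (auto intro!: si continuous_intros)
  have ne: "Kstar P 1 Xs \<noteq> cc"
  proof
    assume eq: "Kstar P 1 Xs = cc"
    have p: "S1 > 0" "S0 - S1 > 0" "S2 > 0" "S1 - S2 > 0"
      using AA_pos[of 0 Xs] BB_pos[of 0 Xs] AA0 BB0 AA_pos[of 1 Xs] BB_pos[of 1 Xs] AA1 BB1 by auto
    have "(S2 - (S1 - S2)) / S1 = (S1 - (S0 - S1)) / S0"
      using eq unfolding cc_eq[of Xs] Kstar_eq AA1 BB1 AA0 BB0 by simp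
    then have "S0 * S2 = S1 * S1" using p by (simp add: field_simps)
    then show False using var_pos by simp
  qed
  have lt: "I Xs * G 1 Xs < I Xs * L 1 Xs"
  proof -
    have x1: "Xs 1 = 1" unfolding Xs_def using n by simp
    have y: "1 + Kstar P 1 Xs * Xs 1 > 0" and z: "1 + cc * Xs 1 > 0"
      using Kstar_bnd[of 1 Xs] cc_bnd x1 by (auto simp: abs_less_iff)
    have yz: "1 + Kstar P 1 Xs * Xs 1 \<noteq> 1 + cc * Xs 1" using ne x1 by simp
    have "G 1 Xs = ((1 + Kstar P 1 Xs * Xs 1) - (1 + cc * Xs 1)) / (1 + Kstar P 1 Xs * Xs 1)"
      unfolding G_def by (simp add: algebra_simps)
    then have "G 1 Xs < L 1 Xs" unfolding L_def using ln_diff_ge(2)[OF y z yz] by simp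
    then show ?thesis using Ipos[of Xs] by simp
  qed
  have "0 = (\<Sum>k<n. \<Sum>X\<in>paths n. I X * G k X)"
    unfolding I_def using zero_sum by simp
  also have "\<dots> = (\<Sum>X\<in>paths n. \<Sum>k<n. I X * G k X)" by (rule sum.swap)
  also have "\<dots> < (\<Sum>X\<in>paths n. \<Sum>k<n. I X * L k X)"
  proof (rule sum_strict_mono_ex1[OF finite_paths])
    show "\<forall>X\<in>paths n. (\<Sum>k<n. I X * G k X) \<le> (\<Sum>k<n. I X * L k X)"
      using le by (auto intro!: sum_mono)
    have "(\<Sum>k<n. I Xs * G k Xs) < (\<Sum>k<n. I Xs * L k Xs)"
      by (rule sum_strict_mono_ex1) (use le[OF Xs] lt n in auto)
    then show "\<exists>X\<in>paths n. (\<Sum>k<n. I X * G k X) < (\<Sum>k<n. I X * L k X)" using Xs by blast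
  qed
  also have "\<dots> = (\<Sum>X\<in>paths n. I X * (\<Sum>k<n. ln (1 + Kstar P k X * X k)))
                 - (\<Sum>X\<in>paths n. I X * (\<Sum>k<n. ln (1 + Kstatic P k X * X k)))"
    unfolding L_def ks by (simp add: sum_subtractf sum_distrib_left right_diff_distrib)
  finally have "(\<Sum>X\<in>paths n. I X * (\<Sum>k<n. ln (1 + Kstatic P k X * X k)))
               < (\<Sum>X\<in>paths n. I X * (\<Sum>k<n. ln (1 + Kstar P k X * X k)))" by simp
  then show ?thesis unfolding int_ELG I_def[symmetric] using n by (simp add: divide_strict_right_mono)
qed

end

theorem mainTheorem4:
  fixes n :: nat and P :: "real set"
  assumes "n > 1"
    and "P \<in> sets lebesgue"
    and "P \<subseteq> {0..1}"
    and "emeasure lebesgue P > 0"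
  shows "(LINT p:P|lebesgue. ELG n (Kstar P) p) > (LINT p:P|lebesgue. ELG n (Kstatic P) p)"
proof -
  interpret setting P using assms(2-4) by unfold_locales
  show ?thesis using main[OF assms(1)] .
qed

end
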